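(* Consider a homogeneous controlled queueing network $\{X_n,n\ge 0\}$ on $\mathcal{S}=\mathbb{Z}_+^M$ with action drift matrix $\mathbf{D}$. Suppose that $\mathrm{rank}(\mathbf{D})<M$ and that the following non-degeneracy condition holds: the system $\mathbf{D}\boldsymbol{\alpha}=\mathbf{0}$ has a solution $\boldsymbol{\alpha}\in\mathbb{R}^M$ such that for every $\mathbf{x}\in\mathcal{S}$ and every $a\in\mathcal{A}(\mathbf{x})$, $\mathbb{P}_a(\boldsymbol{\alpha}'X_1\neq\boldsymbol{\alpha}'\mathbf{x}\mid X_0=\mathbf{x})>0$. Then the network is non-stabilizable.
   Context: A homogeneous controlled queueing network is a controlled discrete-time Markov chain $\{X_n,n\ge0\}$ with state space $\mathcal{S}=\mathbb{Z}_+^M$. For each $\mathbf{z}\in\mathcal{S}$, $\mathcal{A}(\mathbf{z})$ is the set of actions available at $\mathbf{z}$, and $\mathcal{A}=\bigcup_{\mathbf{z}}\mathcal{A}(\mathbf{z})=\{a_1,\dots,a_L\}$ is finite. A (deterministic stationary) policy is a function $\mathcal{P}:\mathcal{S}\to\mathcal{A}$ with $\mathcal{P}(\mathbf{z})\in\mathcal{A}(\mathbf{z})$; under any policy $X_n\in\mathcal{S}$ for all $n$. When action $a$ is taken in state $\mathbf{z}$, transitions follow $\mathbb{P}_a(X_{n+1}=\cdot\mid X_n=\mathbf{z})$, and homogeneity means $\tilde P_a(\mathbf{x}):=\mathbb{P}_a(X_{n+1}-\mathbf{z}=\mathbf{x}\mid X_n=\mathbf{z})$ does not depend on $\mathbf{z}$.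 With $\mathbf{e}_i$ the canonical row vectors of $\mathbb{R}^M$, the set $\mathcal{D}=\{\mathbf{x}:\tilde P_a(\mathbf{x})>0\text{ for some }a\in\mathcal{A}\}$ consists only of vectors of the forms $\mathbf{e}_i$, $-\mathbf{e}_i$, or $\mathbf{e}_i-\mathbf{e}_j$ with $i\neq j$. The drift vector of action $a_i$ is $\boldsymbol{\Delta}_i=\mathbb{E}_{a_i}[X_{n+1}-X_n\mid X_n]=\sum_{\mathbf{x}}\mathbf{x}\,\tilde P_{a_i}(\mathbf{x})$, and the action drift matrix $\mathbf{D}$ is the $L\times M$ matrix with rows $\boldsymbol{\Delta}_i'$, $i=1,\dots,L$. The network is non-stabilizable if there is no policy under which the chain has a positive recurrent class that is reached with probability 1. *)

theory Defs
  imports "HOL-Probability.Probability"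
begin

primrec nstep :: "('s \<Rightarrow> 's pmf) \<Rightarrow> nat \<Rightarrow> 's \<Rightarrow> 's pmf" where
  "nstep K 0 x = return_pmf x"
| "nstep K (Suc n) x = bind_pmf (K x) (nstep K n)"

definition accessible :: "('s \<Rightarrow> 's pmf) \<Rightarrow> 's \<Rightarrow> 's \<Rightarrow> bool" where
  "accessible K x y \<longleftrightarrow> (\<exists>n. pmf (nstep K n x) y > 0)"

definition communicate :: "('s \<Rightarrow> 's pmf) \<Rightarrow> 's \<Rightarrow> 's \<Rightarrow> bool" where
  "communicate K x y \<longleftrightarrow> accessible K x y \<and> accessible K y x"

text \<open>First-passage probabilities: fpass K y n x = P(X_n = y, X_k \<noteq> y for 1 \<le> k < n | X_0 = x), n \<ge> 1.\<close>
fun fpass :: "('s \<Rightarrow> 's pmf) \<Rightarrow> 's \<Rightarrow> nat \<Rightarrow> 's \<Rightarrow> real" where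
  "fpass K y 0 x = 0"
| "fpass K y (Suc 0) x = pmf (K x) y"
| "fpass K y (Suc (Suc n)) x =
     measure_pmf.expectation (K x) (\<lambda>z. if z = y then 0 else fpass K y (Suc n) z)"

text \<open>Positive recurrence: return to y w.p. 1 with finite mean return time.\<close>
definition positive_recurrent :: "('s \<Rightarrow> 's pmf) \<Rightarrow> 's \<Rightarrow> bool" where
  "positive_recurrent K y \<longleftrightarrow>
     summable (\<lambda>n. fpass K y n y) \<and> (\<Sum>n. fpass K y n y) = 1 \<and>
     summable (\<lambda>n. real n * fpass K y n y)"

definition positive_recurrent_class :: "('s \<Rightarrow> 's pmf) \<Rightarrow> 's set \<Rightarrow> bool" where
  "positive_recurrent_class K C \<longleftrightarrow>
     (\<exists>y. C = {z. communicate K y z} \<and> y \<in> C) \<and> (\<forall>z\<in>C. positive_recurrent K z)"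

text \<open>Probability of hitting C within n steps (time 0 included).\<close>
fun reach_within :: "('s \<Rightarrow> 's pmf) \<Rightarrow> 's set \<Rightarrow> nat \<Rightarrow> 's \<Rightarrow> real" where
  "reach_within K C 0 x = (if x \<in> C then 1 else 0)"
| "reach_within K C (Suc n) x =
     (if x \<in> C then 1 else measure_pmf.expectation (K x) (reach_within K C n))"

definition hit_prob :: "('s \<Rightarrow> 's pmf) \<Rightarrow> 's set \<Rightarrow> 's \<Rightarrow> real" where
  "hit_prob K C x = (SUP n. reach_within K C n x)"

text \<open>States are vectors nat^'m (= Z_+^M, M = CARD('m)); P a is the increment
  distribution of action a (homogeneous, independent of the state).\<close>

definition step_pmf :: "('act \<Rightarrow> (int^'m) pmf) \<Rightarrow> 'act \<Rightarrow> nat^'m \<Rightarrow> (nat^'m) pmf" where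
  "step_pmf P a z = map_pmf (\<lambda>d. \<chi> i. nat (int (z$i) + d$i)) (P a)"

definition canon :: "'m \<Rightarrow> int^'m" where
  "canon i = (\<chi> j. if j = i then 1 else 0)"

definition allowed_increments :: "(int^'m) set" where
  "allowed_increments = {canon i | i. True} \<union> {- canon i | i. True}
      \<union> {canon i - canon j | i j. i \<noteq> j}"

definition queueing_network ::
  "(nat^'m \<Rightarrow> 'act set) \<Rightarrow> ('act \<Rightarrow> (int^'m) pmf) \<Rightarrow> bool" where
  "queueing_network Av P \<longleftrightarrow>
     (\<forall>a. \<exists>z. a \<in> Av z) \<and>
     (\<forall>a. set_pmf (P a) \<subseteq> allowed_increments) \<and>
     (\<forall>z a. a \<in> Av z \<longrightarrow> (\<forall>d\<in>set_pmf (P a). \<forall>i. int (z$i) + d$i \<ge> 0))"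

definition drift :: "('act \<Rightarrow> (int^'m) pmf) \<Rightarrow> 'act \<Rightarrow> real^'m" where
  "drift P a = (\<chi> i. measure_pmf.expectation (P a) (\<lambda>d. real_of_int (d$i)))"

definition drift_matrix :: "('act \<Rightarrow> (int^'m) pmf) \<Rightarrow> real^'m^'act" where
  "drift_matrix P = (\<chi> a. drift P a)"

definition policy_kernel ::
  "('act \<Rightarrow> (int^'m) pmf) \<Rightarrow> (nat^'m \<Rightarrow> 'act) \<Rightarrow> nat^'m \<Rightarrow> (nat^'m) pmf" where
  "policy_kernel P pol z = step_pmf P (pol z) z"

definition rvec :: "nat^'m \<Rightarrow> real^'m" where
  "rvec z = (\<chi> i. real (z$i))"

definition stabilizable :: "(nat^'m \<Rightarrow> 'act set) \<Rightarrow> ('act \<Rightarrow> (int^'m) pmf) \<Rightarrow> bool" where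
  "stabilizable Av P \<longleftrightarrow>
     (\<exists>pol. (\<forall>z. pol z \<in> Av z) \<and>
        (\<exists>C. positive_recurrent_class (policy_kernel P pol) C \<and>
             (\<forall>x. hit_prob (policy_kernel P pol) C x = 1)))"

end

theory Submission
  imports Defs
begin

locale kern =
  fixes K :: "'s \<Rightarrow> 's pmf" and y :: 's and M :: "'s \<Rightarrow> real" and B :: real
  assumes fin: "\<And>x. finite (set_pmf (K x))"
    and My: "M y = 0"
    and mart: "\<And>x. (\<Sum>z\<in>set_pmf (K x). pmf (K x) z * M z) = M x"
    and stepB: "\<And>x z. z \<in> set_pmf (K x) \<Longrightarrow> \<bar>M z - M x\<bar> \<le> B"
begin

definition T :: "('s \<Rightarrow> real) \<Rightarrow> 's \<Rightarrow> real" where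
  "T g x = (\<Sum>z\<in>set_pmf (K x). pmf (K x) z * (if z = y then 0 else g z))"

definition S :: "nat \<Rightarrow> 's \<Rightarrow> real" where
  "S j = (T ^^ j) (\<lambda>_. 1)"

definition Q :: "'s \<Rightarrow> real" where
  "Q x = (\<Sum>z\<in>set_pmf (K x). pmf (K x) z * (M z - M x)^2)"

lemma psum: "(\<Sum>z\<in>set_pmf (K x). pmf (K x) z) = 1"
  by (rule sum_pmf_eq_1[OF fin]) auto

lemma T_add: "T (\<lambda>z. g z + h z) x = T g x + T h x"
  unfolding T_def by (simp only: sum.distrib[symmetric]) (intro sum.cong, auto simp: algebra_simps)

lemma T_scale: "T (\<lambda>z. c * g z) x = c * T g x"
  unfolding T_def by (simp only: sum_distrib_left) (intro sum.cong, auto simp: algebra_simps)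

lemma T_mono: "(\<And>z. g z \<le> h z) \<Longrightarrow> T g x \<le> T h x"
  unfolding T_def by (intro sum_mono mult_left_mono) auto

lemma T_zero: "T (\<lambda>_. 0) x = 0"
  unfolding T_def by simp

lemma Tn_add: "(T ^^ n) (\<lambda>z. g z + h z) = (\<lambda>x. (T ^^ n) g x + (T ^^ n) h x)"
  by (induction n) (auto simp: T_add)

lemma Tn_scale: "(T ^^ n) (\<lambda>z. c * g z) = (\<lambda>x. c * (T ^^ n) g x)"
  by (induction n) (auto simp: T_scale)

lemma Tn_zero: "(T ^^ n) (\<lambda>_. 0) = (\<lambda>_. 0)"
  by (induction n) (auto simp: T_zero)

lemma Tn_mono: "(\<And>z. g z \<le> h z) \<Longrightarrow> (T ^^ n) g x \<le> (T ^^ n) h x"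
proof (induction n arbitrary: x)
  case 0 then show ?case by simp
next
  case (Suc n) then show ?case by (simp add: T_mono)
qed

lemma Tn_sum: "(T ^^ n) (\<lambda>z. \<Sum>k<(j::nat). g k z) = (\<lambda>x. \<Sum>k<j. (T ^^ n) (g k) x)"
proof (induction j)
  case 0 then show ?case by (simp add: Tn_zero)
next
  case (Suc j) then show ?case by (simp add: Tn_add)
qed

lemma TM: "T M = M"
proof
  fix x
  have "T M x = (\<Sum>z\<in>set_pmf (K x). pmf (K x) z * M z)"
    unfolding T_def by (intro sum.cong) (auto simp: My)
  then show "T M x = M x" using mart by simp
qed

lemma TnM: "(T ^^ n) M = M"
  by (induction n) (auto simp: TM)

lemma TM2: "T (\<lambda>z. M z ^ 2) x = M x ^ 2 + Q x"
proof -
  let ?A = "set_pmf (K x)" and ?p = "pmf (K x)"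
  have "T (\<lambda>z. M z ^ 2) x = (\<Sum>z\<in>?A. ?p z * M z ^ 2)"
    unfolding T_def by (intro sum.cong) (auto simp: My)
  moreover have "Q x = (\<Sum>z\<in>?A. ?p z * M z ^ 2 - 2 * M x * (?p z * M z) + M x ^ 2 * ?p z)"
    unfolding Q_def by (intro sum.cong) (auto simp: power2_diff algebra_simps)
  moreover have "\<dots> = (\<Sum>z\<in>?A. ?p z * M z ^ 2) - 2 * M x * (\<Sum>z\<in>?A. ?p z * M z) + M x ^ 2 * (\<Sum>z\<in>?A. ?p z)"
    by (simp add: sum.distrib sum_subtractf sum_distrib_left)
  ultimately show ?thesis using mart[of x] psum[of x] by (simp add: power2_eq_square)
qed

lemma A_eq: "(T ^^ n) (\<lambda>z. M z ^ 2) = (\<lambda>x. M x ^ 2 + (\<Sum>k<n. (T ^^ k) Q x))"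
proof (induction n)
  case 0 then show ?case by simp
next
  case (Suc n)
  have "(T ^^ Suc n) (\<lambda>z. M z ^ 2) = (T ^^ n) (T (\<lambda>z. M z ^ 2))"
    by (simp only: funpow_Suc_right comp_apply)
  also have "T (\<lambda>z. M z ^ 2) = (\<lambda>x. M x ^ 2 + Q x)" using TM2 by auto
  also have "(T ^^ n) (\<lambda>x. M x ^ 2 + Q x) = (\<lambda>x. (T ^^ n) (\<lambda>z. M z ^ 2) x + (T ^^ n) Q x)"
    by (rule Tn_add)
  finally show ?case using Suc by (simp add: add.assoc)
qed

lemma S_nonneg: "0 \<le> S j x"
  using Tn_mono[of "\<lambda>_. 0" "\<lambda>_. 1" j x] by (simp add: S_def Tn_zero)

lemma S_add: "(T ^^ n) (S j) = S (n + j)"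
  by (simp add: S_def funpow_add)

lemma S_Suc: "S (Suc n) = T (S n)"
  by (simp add: S_def)

lemma Q_nonneg: "0 \<le> Q x"
  unfolding Q_def by (intro sum_nonneg) auto

lemma Q_le: "Q x \<le> B^2"
proof -
  have "Q x \<le> (\<Sum>z\<in>set_pmf (K x). pmf (K x) z * B^2)"
    unfolding Q_def
  proof (intro sum_mono mult_left_mono)
    fix z assume "z \<in> set_pmf (K x)"
    then have "\<bar>M z - M x\<bar> \<le> B" by (rule stepB)
    then show "(M z - M x)^2 \<le> B^2"
      by (metis abs_ge_zero abs_le_square_iff order_trans abs_of_nonneg le_cases power2_abs)
  qed auto
  also have "\<dots> = B^2" using psum[of x] by (simp add: sum_distrib_right[symmetric])
  finally show ?thesis .
qed

lemma key1: "M x ^ 2 * (1 - S j x) \<le> (\<Sum>k<j. (T ^^ k) Q x)"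
proof -
  define c where "c = M x"
  have "0 \<le> (T ^^ j) (\<lambda>z. (M z - c)^2) x"
    using Tn_mono[of "\<lambda>_. 0" "\<lambda>z. (M z - c)^2" j x] by (simp add: Tn_zero)
  also have "(\<lambda>z. (M z - c)^2) = (\<lambda>z. (M z ^ 2 + (-2*c) * M z) + c^2 * 1)"
    by (auto simp: power2_diff algebra_simps)
  also have "(T ^^ j) \<dots> x = (T ^^ j) (\<lambda>z. M z ^ 2) x + (-2*c) * (T ^^ j) M x + c^2 * S j x"
    by (subst Tn_add, subst Tn_add, subst Tn_scale, subst Tn_scale) (simp add: S_def)
  also have "\<dots> = M x ^ 2 + (\<Sum>k<j. (T ^^ k) Q x) - 2 * c * M x + c^2 * S j x"
    by (simp add: A_eq TnM)
  finally show ?thesis unfolding c_def by (simp add: algebra_simps power2_eq_square)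
qed

lemma locality:
  assumes "\<And>w. \<bar>M w - M x\<bar> \<le> real n * B \<Longrightarrow> g w \<le> h w"
  shows "(T ^^ n) g x \<le> (T ^^ n) h x"
  using assms
proof (induction n arbitrary: x)
  case 0 then show ?case by simp
next
  case (Suc n x)
  have le: "(T ^^ n) g z \<le> (T ^^ n) h z" if z: "z \<in> set_pmf (K x)" for z
  proof (rule Suc.IH)
    fix w assume "\<bar>M w - M z\<bar> \<le> real n * B"
    moreover have "\<bar>M z - M x\<bar> \<le> B" using stepB[OF z] .
    ultimately have "\<bar>M w - M x\<bar> \<le> real (Suc n) * B" by (simp add: algebra_simps)
    then show "g w \<le> h w" by (rule Suc.prems)
  qed
  have "T ((T ^^ n) g) x \<le> T ((T ^^ n) h) x"
    unfolding T_def[of "(T ^^ n) g" x] T_def[of "(T ^^ n) h" x]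
    by (intro sum_mono) (auto intro: mult_left_mono le)
  then show "(T ^^ Suc n) g x \<le> (T ^^ Suc n) h x" by simp
qed

lemma T_diff: "T (\<lambda>z. g z - h z) x = T g x - T h x"
  unfolding T_def by (simp only: sum_subtractf[symmetric]) (intro sum.cong, auto simp: algebra_simps)

lemma T_one_le: "T (\<lambda>_. 1) x \<le> 1"
proof -
  have "T (\<lambda>_. 1) x \<le> (\<Sum>z\<in>set_pmf (K x). pmf (K x) z)"
    unfolding T_def by (intro sum_mono) auto
  then show ?thesis using psum[of x] by simp
qed

lemma S_dec: "S (Suc n) x \<le> S n x"
proof -
  have "S (Suc n) x = (T ^^ n) (T (\<lambda>_. 1)) x" by (simp only: S_def funpow_Suc_right comp_apply)
  also have "\<dots> \<le> (T ^^ n) (\<lambda>_. 1) x" by (rule Tn_mono) (rule T_one_le)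
  finally show ?thesis by (simp add: S_def)
qed

lemma fpass1: "fpass K y (Suc 0) x = S 0 x - S 1 x"
proof -
  let ?A = "set_pmf (K x)" and ?p = "pmf (K x)"
  have "S 0 x - S 1 x = (\<Sum>z\<in>?A. ?p z) - T (\<lambda>_. 1) x" using psum[of x] by (simp add: S_def)
  also have "\<dots> = (\<Sum>z\<in>?A. if z = y then ?p z else 0)"
    unfolding T_def by (simp only: sum_subtractf[symmetric]) (intro sum.cong, auto)
  also have "\<dots> = (if y \<in> ?A then ?p y else 0)" using fin[of x] by (simp add: sum.delta)
  also have "\<dots> = ?p y" by (auto simp: set_pmf_iff)
  finally show ?thesis by simp
qed

lemma fpassSS: "fpass K y (Suc (Suc n)) x = T (fpass K y (Suc n)) x"
proof -
  have "fpass K y (Suc (Suc n)) x = measure_pmf.expectation (K x) (\<lambda>z. if z = y then 0 else fpass K y (Suc n) z)"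
    by simp
  also have "\<dots> = (\<Sum>z\<in>set_pmf (K x). (if z = y then 0 else fpass K y (Suc n) z) * pmf (K x) z)"
    by (rule integral_measure_pmf_real[OF fin]) auto
  also have "\<dots> = T (fpass K y (Suc n)) x" unfolding T_def by (simp add: mult.commute)
  finally show ?thesis .
qed

lemma fpass_S: "fpass K y (Suc n) x = S n x - S (Suc n) x"
proof (induction n arbitrary: x)
  case 0 then show ?case using fpass1 by simp
next
  case (Suc n x)
  have e: "fpass K y (Suc n) = (\<lambda>z. S n z - S (Suc n) z)" using Suc by auto
  have "fpass K y (Suc (Suc n)) x = T (\<lambda>z. S n z - S (Suc n) z) x" by (simp only: fpassSS e)
  also have "\<dots> = S (Suc n) x - S (Suc (Suc n)) x" by (simp add: T_diff S_Suc)
  finally show ?case .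
qed

lemma Tn_nonneg: "(\<And>z. 0 \<le> g z) \<Longrightarrow> 0 \<le> (T ^^ n) g x"
  using Tn_mono[of "\<lambda>_. 0" g n x] by (simp add: Tn_zero)

lemma contra:
  assumes v: "0 < v" "\<And>x. v \<le> Q x" and pr: "positive_recurrent K y"
  shows False
proof -
  define f where "f k = fpass K y k y" for k
  from pr have sf: "summable f" "suminf f = 1" "summable (\<lambda>k. real k * f k)"
    unfolding positive_recurrent_def f_def[abs_def] by auto
  define s where "s k = S k y" for k
  have f0: "f 0 = 0" by (simp add: f_def)
  have fS: "f (Suc k) = s k - s (Suc k)" for k by (simp add: f_def s_def fpass_S)
  have fnn: "0 \<le> f k" for k
    using S_dec[of "k - 1" y] by (cases k) (auto simp: f0 fS s_def)
  have snn: "0 \<le> s k" for k by (simp add: s_def S_nonneg)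
  have s_eq: "s k = 1 - (\<Sum>i<Suc k. f i)" for k
  proof (induction k)
    case 0 then show ?case by (simp add: s_def S_def f0)
  next
    case (Suc k) then show ?case using fS[of k] by simp
  qed
  have s_tail: "s k = (\<Sum>i. f (i + Suc k))" for k
    using suminf_minus_initial_segment[OF sf(1), of "Suc k"] s_eq[of k] sf(2) by simp
  define L where "L = (\<Sum>i. real i * f i)"
  define G where "G N = (\<Sum>i<Suc N. real i * f i)" for N
  have partial: "(\<Sum>k<N. s k) = G N + real N * s N" for N
  proof (induction N)
    case 0 then show ?case by (simp add: G_def f0)
  next
    case (Suc N)
    have "(\<Sum>k<Suc N. s k) = G N + real (Suc N) * s N" using Suc by (simp add: algebra_simps)
    also have "s N = f (Suc N) + s (Suc N)" using fS[of N] by simp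
    finally show ?case by (simp add: G_def algebra_simps)
  qed
  have Ns: "real N * s N \<le> L - G N" for N
  proof -
    have sm1: "summable (\<lambda>i. f (i + Suc N))" using sf(1) summable_iff_shift[of f "Suc N"] by blast
    have sm2: "summable (\<lambda>i. real (i + Suc N) * f (i + Suc N))"
      using sf(3) summable_iff_shift[of "\<lambda>i. real i * f i" "Suc N"] by blast
    have "real N * s N = (\<Sum>i. real N * f (i + Suc N))"
      using suminf_mult[OF sm1, of "real N"] s_tail[of N] by simp
    also have "\<dots> \<le> (\<Sum>i. real (i + Suc N) * f (i + Suc N))"
      by (rule suminf_le[OF _ summable_mult[OF sm1] sm2]) (intro mult_right_mono fnn, simp)
    also have "\<dots> = L - G N"
      unfolding L_def G_def using suminf_minus_initial_segment[OF sf(3), of "Suc N"] by simp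
    finally show ?thesis .
  qed
  have Gnn: "G N \<le> L - real N * s N" for N using Ns[of N] by simp
  have bnd: "(\<Sum>k\<le>n. s k) \<le> L" for n
  proof -
    have "(\<Sum>k\<le>n. s k) = (\<Sum>k<Suc n. s k)" by (simp add: lessThan_Suc_atMost)
    also have "\<dots> = G (Suc n) + real (Suc n) * s (Suc n)" by (rule partial)
    also have "\<dots> \<le> L" using Ns[of "Suc n"] by simp
    finally show ?thesis .
  qed
  have ss: "summable s" by (rule bounded_imp_summable[OF snn bnd])
  define R where "R n = (\<Sum>k. s (k + n))" for n
  have R0: "R \<longlonglongrightarrow> 0"
  proof -
    have "R = (\<lambda>n. suminf s - (\<Sum>i<n. s i))"
      using suminf_minus_initial_segment[OF ss] by (auto simp: R_def)
    moreover have "(\<lambda>n. suminf s - (\<Sum>i<n. s i)) \<longlonglongrightarrow> suminf s - suminf s"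
      by (intro tendsto_diff tendsto_const summable_LIMSEQ[OF ss])
    ultimately show ?thesis by simp
  qed
  have partR: "(\<Sum>k<j. s (n + k)) \<le> R n" for n j
  proof -
    have "(\<Sum>k<j. s (k + n)) \<le> R n" unfolding R_def
      by (rule sum_le_suminf) (auto simp: snn ss)
    then show ?thesis by (simp add: add.commute)
  qed
  have s0: "s \<longlonglongrightarrow> 0" by (rule summable_LIMSEQ_zero[OF ss])
  have core: "v \<le> (real n * B)^2 * s (n + j) + B^2 * R n" if n1: "1 \<le> n" for n j
  proof -
    have Qk: "0 \<le> (T ^^ k) Q x" for k x by (rule Tn_nonneg) (rule Q_nonneg)
    have "v \<le> Q y" by (rule v(2))
    also have "\<dots> = (T ^^ 0) Q y" by simp
    also have "\<dots> \<le> (\<Sum>k<n. (T ^^ k) Q y)"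
      by (rule member_le_sum[where f = "\<lambda>k. (T ^^ k) Q y"]) (use n1 Qk in auto)
    also have "\<dots> = (T ^^ n) (\<lambda>z. M z ^ 2) y" by (simp add: A_eq My)
    also have "(\<lambda>z. M z ^ 2) = (\<lambda>z. M z ^ 2 * S j z + M z ^ 2 * (1 - S j z))"
      by (auto simp: algebra_simps)
    also have "(T ^^ n) \<dots> y = (T ^^ n) (\<lambda>z. M z ^ 2 * S j z) y + (T ^^ n) (\<lambda>z. M z ^ 2 * (1 - S j z)) y"
      by (simp only: Tn_add)
    also have "(T ^^ n) (\<lambda>z. M z ^ 2 * S j z) y \<le> (T ^^ n) (\<lambda>z. (real n * B)^2 * S j z) y"
    proof (rule locality)
      fix w assume "\<bar>M w - M y\<bar> \<le> real n * B"
      then have "\<bar>M w\<bar> \<le> real n * B" by (simp add: My)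
      then have "M w ^ 2 \<le> (real n * B)^2"
        by (metis abs_ge_zero power2_abs power_mono)
      then show "M w ^ 2 * S j w \<le> (real n * B)^2 * S j w"
        by (rule mult_right_mono) (rule S_nonneg)
    qed
    also have "(T ^^ n) (\<lambda>z. (real n * B)^2 * S j z) y = (real n * B)^2 * s (n + j)"
      by (simp add: Tn_scale S_add s_def)
    also have "(T ^^ n) (\<lambda>z. M z ^ 2 * (1 - S j z)) y \<le> (T ^^ n) (\<lambda>z. \<Sum>k<j. B^2 * S k z) y"
    proof (rule Tn_mono)
      fix z
      have "M z ^ 2 * (1 - S j z) \<le> (\<Sum>k<j. (T ^^ k) Q z)" by (rule key1)
      also have "\<dots> \<le> (\<Sum>k<j. B^2 * S k z)"
      proof (rule sum_mono)
        fix k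
        have "(T ^^ k) Q z \<le> (T ^^ k) (\<lambda>z. B^2 * 1) z" by (rule Tn_mono) (simp add: Q_le)
        then show "(T ^^ k) Q z \<le> B^2 * S k z" by (simp only: Tn_scale S_def)
      qed
      finally show "M z ^ 2 * (1 - S j z) \<le> (\<Sum>k<j. B^2 * S k z)" .
    qed
    also have "(T ^^ n) (\<lambda>z. \<Sum>k<j. B^2 * S k z) y = B^2 * (\<Sum>k<j. s (n + k))"
      by (simp add: Tn_sum Tn_scale S_add s_def sum_distrib_left)
    also have "\<dots> \<le> B^2 * R n" by (intro mult_left_mono partR) simp
    finally show ?thesis by simp
  qed
  have "(\<lambda>n. B^2 * R n) \<longlonglongrightarrow> B^2 * 0" by (intro tendsto_mult tendsto_const R0)
  then have "eventually (\<lambda>n. B^2 * R n < v/2) sequentially"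
    using v(1) by (intro order_tendstoD(2)) auto
  then obtain n0 where n0: "\<And>n. n \<ge> n0 \<Longrightarrow> B^2 * R n < v/2"
    by (auto simp: eventually_sequentially)
  define n where "n = Suc n0"
  have "(\<lambda>j. (real n * B)^2 * s (j + n)) \<longlonglongrightarrow> (real n * B)^2 * 0"
    by (intro tendsto_mult tendsto_const LIMSEQ_ignore_initial_segment s0)
  then have "eventually (\<lambda>j. (real n * B)^2 * s (j + n) < v/2) sequentially"
    using v(1) by (intro order_tendstoD(2)) auto
  then obtain j where j: "(real n * B)^2 * s (j + n) < v/2"
    by (auto simp: eventually_sequentially)
  have "v \<le> (real n * B)^2 * s (n + j) + B^2 * R n" by (rule core) (simp add: n_def)
  moreover have "B^2 * R n < v/2" by (rule n0) (simp add: n_def)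
  ultimately show False using j by (simp add: add.commute)
qed

end


lemma fin_ai: "finite (allowed_increments :: (int^'m) set)"
proof -
  have "(allowed_increments :: (int^'m) set) \<subseteq> range canon \<union> range (\<lambda>i. - canon i) \<union> (\<lambda>(i,j). canon i - canon j) ` UNIV"
    by (auto simp: allowed_increments_def)
  then show ?thesis by (rule finite_subset) auto
qed

definition dvec :: "int^'m \<Rightarrow> real^'m" where "dvec d = (\<chi> i. real_of_int (d$i))"

lemma rvec_step: "(\<And>i. 0 \<le> int (x$i) + d$i) \<Longrightarrow> rvec (\<chi> i. nat (int (x$i) + d$i)) = rvec x + dvec d"
  by (auto simp: vec_eq_iff rvec_def dvec_def)

theorem theorem2:
  fixes Av :: "nat^'m \<Rightarrow> 'act::finite set"
    and P :: "'act \<Rightarrow> (int^'m) pmf"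
  assumes "queueing_network Av P"
    and "rank (drift_matrix P) < CARD('m)"
    and "\<exists>\<alpha>::real^'m. drift_matrix P *v \<alpha> = 0 \<and>
           (\<forall>x. \<forall>a\<in>Av x.
              measure_pmf.prob (step_pmf P a x) {y. \<alpha> \<bullet> rvec y \<noteq> \<alpha> \<bullet> rvec x} > 0)"
  shows "\<not> stabilizable Av P"
proof
  assume "stabilizable Av P"
  then obtain pol C where pol: "\<And>z. pol z \<in> Av z"
    and prc: "positive_recurrent_class (policy_kernel P pol) C"
    by (auto simp: stabilizable_def)
  from prc obtain y where pry: "positive_recurrent (policy_kernel P pol) y"
    by (auto simp: positive_recurrent_class_def)
  from assms(3) obtain \<alpha> :: "real^'m" where \<alpha>0: "drift_matrix P *v \<alpha> = 0"
    and pos: "\<And>x a. a \<in> Av x \<Longrightarrow>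
              measure_pmf.prob (step_pmf P a x) {y. \<alpha> \<bullet> rvec y \<noteq> \<alpha> \<bullet> rvec x} > 0"
    by blast
  from assms(1) have sub: "\<And>a. set_pmf (P a) \<subseteq> allowed_increments"
    and nn: "\<And>z a d i. a \<in> Av z \<Longrightarrow> d \<in> set_pmf (P a) \<Longrightarrow> 0 \<le> int (z$i) + d$i"
    by (auto simp: queueing_network_def)
  define K where "K = policy_kernel P pol"
  define g :: "nat^'m \<Rightarrow> int^'m \<Rightarrow> nat^'m" where "g x d = (\<chi> i. nat (int (x$i) + d$i))" for x d
  have Kx: "K x = map_pmf (g x) (P (pol x))" for x
    by (simp add: K_def policy_kernel_def step_pmf_def g_def[abs_def])
  have finP: "finite (set_pmf (P a))" for a using finite_subset[OF sub fin_ai] .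
  have finK: "finite (set_pmf (K x))" for x by (simp add: Kx finP)
  define F where "F z = \<alpha> \<bullet> rvec z" for z
  define M where "M z = F z - F y" for z
  have Mg: "M (g x d) = M x + \<alpha> \<bullet> dvec d" if "d \<in> set_pmf (P (pol x))" for x d
  proof -
    have "rvec (g x d) = rvec x + dvec d" unfolding g_def
      by (rule rvec_step) (rule nn[OF pol that])
    then show ?thesis by (simp add: M_def F_def inner_add_right)
  qed
  have exp_P: "measure_pmf.expectation (P a) h = (\<Sum>d\<in>set_pmf (P a). h d * pmf (P a) d)" for a and h :: "int^'m \<Rightarrow> real"
    by (rule integral_measure_pmf_real[OF finP]) auto
  have exp_K: "(\<Sum>z\<in>set_pmf (K x). pmf (K x) z * h z) = measure_pmf.expectation (P (pol x)) (\<lambda>d. h (g x d))" for x and h :: "nat^'m \<Rightarrow> real"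
  proof -
    have "measure_pmf.expectation (K x) h = (\<Sum>z\<in>set_pmf (K x). h z * pmf (K x) z)"
      by (rule integral_measure_pmf_real[OF finK]) auto
    also have "\<dots> = (\<Sum>z\<in>set_pmf (K x). pmf (K x) z * h z)"
      by (rule sum.cong[OF refl mult.commute])
    finally have "(\<Sum>z\<in>set_pmf (K x). pmf (K x) z * h z) = measure_pmf.expectation (K x) h" by simp
    then show ?thesis by (simp add: Kx)
  qed
  have intP: "integrable (measure_pmf (P a)) h" for a and h :: "int^'m \<Rightarrow> real"
    by (rule integrable_measure_pmf_finite[OF finP])
  have drift0: "measure_pmf.expectation (P a) (\<lambda>d. \<alpha> \<bullet> dvec d) = 0" for a
  proof -
    have "measure_pmf.expectation (P a) (\<lambda>d. \<alpha> \<bullet> dvec d)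
        = measure_pmf.expectation (P a) (\<lambda>d. \<Sum>i\<in>UNIV. \<alpha>$i * real_of_int (d$i))"
      by (simp add: inner_vec_def dvec_def)
    also have "\<dots> = (\<Sum>i\<in>UNIV. \<alpha>$i * measure_pmf.expectation (P a) (\<lambda>d. real_of_int (d$i)))"
      proof -
      have "measure_pmf.expectation (P a) (\<lambda>d. \<Sum>i\<in>UNIV. (\<lambda>i d. \<alpha>$i * real_of_int (d$i)) i d)
          = (\<Sum>i\<in>UNIV. measure_pmf.expectation (P a) ((\<lambda>i d. \<alpha>$i * real_of_int (d$i)) i))"
        by (rule Bochner_Integration.integral_sum) (rule intP)
      then show ?thesis by simp
    qed
    also have "\<dots> = (drift_matrix P *v \<alpha>) $ a"
      by (simp add: matrix_vector_mult_def drift_matrix_def drift_def mult_ac)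
    also have "\<dots> = 0" by (simp add: \<alpha>0)
    finally show ?thesis .
  qed
  have mart: "(\<Sum>z\<in>set_pmf (K x). pmf (K x) z * M z) = M x" for x
  proof -
    have "(\<Sum>z\<in>set_pmf (K x). pmf (K x) z * M z) = measure_pmf.expectation (P (pol x)) (\<lambda>d. M (g x d))"
      by (rule exp_K)
    also have "\<dots> = measure_pmf.expectation (P (pol x)) (\<lambda>d. M x + \<alpha> \<bullet> dvec d)"
      unfolding exp_P by (intro sum.cong) (auto simp: Mg)
    also have "\<dots> = measure_pmf.expectation (P (pol x)) (\<lambda>d. M x) + measure_pmf.expectation (P (pol x)) (\<lambda>d. \<alpha> \<bullet> dvec d)"
      by (rule Bochner_Integration.integral_add) (rule intP)+
    also have "\<dots> = M x" by (simp add: drift0)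
    finally show ?thesis .
  qed
  define W where "W a = measure_pmf.expectation (P a) (\<lambda>d. (\<alpha> \<bullet> dvec d)^2)" for a
  define B where "B = Max ((\<lambda>d. \<bar>\<alpha> \<bullet> dvec d\<bar>) ` (allowed_increments :: (int^'m) set))"
  have stepB: "\<bar>M z - M x\<bar> \<le> B" if "z \<in> set_pmf (K x)" for x z
  proof -
    from that obtain d where d: "d \<in> set_pmf (P (pol x))" and z: "z = g x d" by (auto simp: Kx)
    have "\<bar>M z - M x\<bar> = \<bar>\<alpha> \<bullet> dvec d\<bar>" using Mg[OF d] z by simp
    also have "\<dots> \<le> B" unfolding B_def using d sub fin_ai by (intro Max_ge) auto
    finally show ?thesis .
  qed
  interpret kern K y M B
    by unfold_locales (fact finK, simp add: M_def, fact mart, fact stepB)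
  have QW: "Q x = W (pol x)" for x
  proof -
    have "Q x = measure_pmf.expectation (P (pol x)) (\<lambda>d. (M (g x d) - M x)^2)"
      unfolding Q_def by (rule exp_K)
    also have "\<dots> = W (pol x)" unfolding W_def exp_P by (intro sum.cong) (auto simp: Mg)
    finally show ?thesis .
  qed
  have Qpos: "0 < Q x" for x
  proof -
    have "measure_pmf.prob (K x) {y. \<alpha> \<bullet> rvec y \<noteq> \<alpha> \<bullet> rvec x} > 0"
      using pos[OF pol[of x]] by (simp add: K_def policy_kernel_def)
    then have "set_pmf (K x) \<inter> {y. \<alpha> \<bullet> rvec y \<noteq> \<alpha> \<bullet> rvec x} \<noteq> {}"
      using measure_pmf_zero_iff[of "K x" "{y. \<alpha> \<bullet> rvec y \<noteq> \<alpha> \<bullet> rvec x}"] by linarith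
    then obtain z where z: "z \<in> set_pmf (K x)" and ne: "F z \<noteq> F x" by (auto simp: F_def)
    have "0 < pmf (K x) z * (M z - M x)^2"
      using z ne by (auto simp: pmf_positive_iff M_def)
    also have "\<dots> \<le> Q x" unfolding Q_def
      by (rule member_le_sum[where f = "\<lambda>z. pmf (K x) z * (M z - M x)^2"]) (use z finK in auto)
    finally show ?thesis .
  qed
  define v where "v = Min (range Q)"
  have finQ: "finite (range Q)"
  proof (rule finite_subset)
    show "range Q \<subseteq> range W" using QW by auto
  qed auto
  have "v \<in> range Q" unfolding v_def using finQ by (intro Min_in) auto
  then have v0: "0 < v" using Qpos by auto
  have vQ: "v \<le> Q x" for x unfolding v_def using finQ by (intro Min_le) auto
  show False using contra[OF v0 vQ] pry by (simp add: K_def)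
qed

end
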